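(* Let $n \ge 1$ (the number of clients in a secure-aggregation shard), $d\ge 1$, $m \ge 2$ be integers, and let $\varepsilon>0$, $\Delta>0$. Set $\alpha = 1/n$ and $\beta = e^{-\varepsilon/\Delta}$. For each input tuple $v=(v_1,\dots,v_n)$ of integer vectors $v_i\in\mathbb{Z}^d$, define the randomized mechanism $$\mathcal{M}(v) = \left(\sum_{i=1}^{n} \big( (v_i + X_i - Y_i) \bmod m\big)\right) \bmod m \;\in\; \mathbb{Z}_m^d,$$ where all $X_i, Y_i\in\mathbb{Z}_{\ge 0}^d$ have mutually independent coordinates, each distributed as Pólya$(\alpha,\beta)$, independent of the input, and "$\bmod\ m$" is applied entrywise. Call two input tuples $v, v'$ neighboring if they differ in exactly one index $j$ and $\|v_j - v'_j\|_1 \le \Delta$. Then $\mathcal{M}$ is $\varepsilon$-differentially private: for all neighboring $v,v'$ and every set $S\subseteq \mathbb{Z}_m^d$, $\Pr[\mathcal{M}(v)\in S]\le e^{\varepsilon}\Pr[\mathcal{M}(v')\in S]$.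
   Context: A random variable $X$ is Pólya$(\alpha,\beta)$ with $\alpha>0$, $\beta\in(0,1)$ if $X$ takes values in $\mathbb{Z}_{\ge 0}$ with $P(X=k) = \binom{\alpha+k-1}{\alpha-1}\beta^k(1-\beta)^\alpha$, where the generalized binomial coefficient is defined via Gamma functions, $\binom{\alpha+k-1}{\alpha-1} = \frac{\Gamma(\alpha+k)}{\Gamma(\alpha)\,k!}$. Equivalently, $X$ is obtained by drawing $\lambda\sim\mathrm{Gamma}(\alpha,\beta/(1-\beta))$ (shape $\alpha$, scale $\beta/(1-\beta)$) and then $X\sim\mathrm{Poisson}(\lambda)$. For an integer $a$, $a \bmod m$ denotes the representative in $\{0,\dots,m-1\}$. *)

theory Defs
  imports "HOL-Probability.Probability"
begin

definition polya_pmf :: "real \<Rightarrow> real \<Rightarrow> nat pmf" where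
  "polya_pmf \<alpha> \<beta> = embed_pmf (\<lambda>k. Gamma (\<alpha> + real k) / (Gamma \<alpha> * fact k)
                                       * \<beta> ^ k * (1 - \<beta>) powr \<alpha>)"

text \<open>Inputs: v i k is coordinate k (k < d) of the vector of client i (i < n).
  Outputs: vectors in Z_m^d represented as functions nat => int with values in
  {0..m-1} at coordinates k < d and 0 elsewhere.\<close>
definition secagg_mech ::
  "nat \<Rightarrow> nat \<Rightarrow> int \<Rightarrow> real \<Rightarrow> real \<Rightarrow> (nat \<Rightarrow> nat \<Rightarrow> int) \<Rightarrow> (nat \<Rightarrow> int) pmf" where
  "secagg_mech n d m \<alpha> \<beta> v =
     map_pmf (\<lambda>(X, Y). \<lambda>k. if k < d then
                 (\<Sum>i<n. (v i k + int (X (i, k)) - int (Y (i, k))) mod m) mod m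
               else 0)
       (pair_pmf (Pi_pmf ({..<n} \<times> {..<d}) 0 (\<lambda>_. polya_pmf \<alpha> \<beta>))
                 (Pi_pmf ({..<n} \<times> {..<d}) 0 (\<lambda>_. polya_pmf \<alpha> \<beta>)))"

definition neighboring ::
  "nat \<Rightarrow> nat \<Rightarrow> real \<Rightarrow> (nat \<Rightarrow> nat \<Rightarrow> int) \<Rightarrow> (nat \<Rightarrow> nat \<Rightarrow> int) \<Rightarrow> bool" where
  "neighboring n d \<Delta> v v' \<longleftrightarrow>
     (\<exists>j<n. (\<exists>k<d. v j k \<noteq> v' j k) \<and>
            (\<forall>i<n. i \<noteq> j \<longrightarrow> (\<forall>k<d. v i k = v' i k)) \<and>
            real_of_int (\<Sum>k<d. \<bar>v j k - v' j k\<bar>) \<le> \<Delta>)"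

end

theory Submission imports Defs "HOL-Computational_Algebra.Formal_Power_Series" begin

definition pw :: "real \<Rightarrow> real \<Rightarrow> nat \<Rightarrow> real" where
  "pw \<alpha> \<beta> k = pochhammer \<alpha> k / fact k * \<beta> ^ k * (1 - \<beta>) powr \<alpha>"

lemma poch_gchoose: "pochhammer (\<alpha>::real) k / fact k = (-1)^k * ((-\<alpha>) gchoose k)"
  by (simp add: gbinomial_pochhammer)

lemma polya_pmf_eq:
  assumes a: "\<alpha> > 0" and b: "0 < \<beta>" "\<beta> < 1"
  shows "pmf (polya_pmf \<alpha> \<beta>) k = pw \<alpha> \<beta> k"
proof -
  define f where "f = (\<lambda>k. Gamma (\<alpha> + real k) / (Gamma \<alpha> * fact k) * \<beta> ^ k * (1 - \<beta>) powr \<alpha>)"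
  have fe: "f k = pw \<alpha> \<beta> k" for k
  proof -
    have "\<alpha> \<notin> \<int>\<^sub>\<le>\<^sub>0" using a by (auto elim!: nonpos_Ints_cases)
    hence "pochhammer \<alpha> k = Gamma (\<alpha> + real k) / Gamma \<alpha>" by (simp add: pochhammer_Gamma)
    thus ?thesis by (simp add: f_def pw_def)
  qed
  have nn: "0 \<le> pw \<alpha> \<beta> k" for k unfolding pw_def using a b
    by (intro mult_nonneg_nonneg divide_nonneg_nonneg pochhammer_nonneg) auto
  have s: "(\<lambda>k. pochhammer \<alpha> k / fact k * \<beta> ^ k) sums (1 - \<beta>) powr (-\<alpha>)"
  proof -
    have "(\<lambda>k. ((-\<alpha>) gchoose k) * (-\<beta>)^k) sums (1 + (-\<beta>)) powr (-\<alpha>)"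
      using b by (intro gen_binomial_real) auto
    moreover have "((-\<alpha>) gchoose k) * (-\<beta>)^k = pochhammer \<alpha> k / fact k * \<beta> ^ k" for k
      by (simp add: poch_gchoose power_minus[of \<beta>])
    ultimately show ?thesis by simp
  qed
  hence s2: "pw \<alpha> \<beta> sums ((1 - \<beta>) powr (-\<alpha>) * (1 - \<beta>) powr \<alpha>)"
    unfolding pw_def by (rule sums_mult2)
  have "(1 - \<beta>) powr (-\<alpha>) * (1 - \<beta>) powr \<alpha> = 1" using b by (simp add: powr_minus)
  with s2 have s3: "pw \<alpha> \<beta> sums 1" by simp
  have "(\<integral>\<^sup>+x. ennreal (f x) \<partial>count_space UNIV) = 1"
    unfolding fe nn_integral_count_space_nat
    using suminf_ennreal2[OF nn sums_summable[OF s3]] sums_unique[OF s3] by simp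
  moreover have "\<And>x. 0 \<le> f x" using nn fe by simp
  ultimately have "pmf (embed_pmf f) k = f k" by (intro pmf_embed_pmf) auto
  thus ?thesis unfolding polya_pmf_def f_def[symmetric] fe .
qed


lemma polya_add:
  assumes a: "\<alpha> > 0" "\<gamma> > 0" and b: "0 < \<beta>" "\<beta> < 1"
  shows "map_pmf (\<lambda>(x,y). x + y) (pair_pmf (polya_pmf \<alpha> \<beta>) (polya_pmf \<gamma> \<beta>)) = polya_pmf (\<alpha> + \<gamma>) \<beta>"
proof (rule pmf_eqI)
  fix k :: nat
  have pre: "(\<lambda>(x,y). x + y) -` {k} = (\<lambda>a. (a, k - a)) ` {0..k}"
    by (auto simp: image_iff)
  have "pmf (map_pmf (\<lambda>(x,y). x + y) (pair_pmf (polya_pmf \<alpha> \<beta>) (polya_pmf \<gamma> \<beta>))) k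
      = (\<Sum>a\<in>{0..k}. pw \<alpha> \<beta> a * pw \<gamma> \<beta> (k - a))"
    unfolding pmf_map pre
    by (subst measure_measure_pmf_finite) (auto simp: sum.reindex inj_on_def pmf_pair polya_pmf_eq a b)
  also have "\<dots> = (\<Sum>a\<in>{0..k}. ((-\<alpha>) gchoose a) * ((-\<gamma>) gchoose (k - a))) * ((-1)^k * \<beta>^k * (1-\<beta>) powr (\<alpha>+\<gamma>))"
    unfolding sum_distrib_right
  proof (rule sum.cong[OF refl])
    fix a assume "a \<in> {0..k}"
    hence ak: "k = a + (k - a)" by auto
    have "(-1::real)^k = (-1)^a * (-1)^(k-a)" "\<beta>^k = \<beta>^a * \<beta>^(k-a)"
      by (subst ak, simp only: power_add)+
    moreover have "(1-\<beta>) powr (\<alpha>+\<gamma>) = (1-\<beta>) powr \<alpha> * (1-\<beta>) powr \<gamma>" by (simp add: powr_add)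
    ultimately show "pw \<alpha> \<beta> a * pw \<gamma> \<beta> (k - a) = ((-\<alpha>) gchoose a) * ((-\<gamma>) gchoose (k - a)) * ((-1)^k * \<beta>^k * (1-\<beta>) powr (\<alpha>+\<gamma>))"
      unfolding pw_def poch_gchoose by (simp add: algebra_simps)
  qed
  also have "\<dots> = pw (\<alpha>+\<gamma>) \<beta> k"
    unfolding gbinomial_Vandermonde pw_def poch_gchoose by (simp add: algebra_simps)
  also have "\<dots> = pmf (polya_pmf (\<alpha>+\<gamma>) \<beta>) k" using a b by (simp add: polya_pmf_eq)
  finally show "pmf (map_pmf (\<lambda>(x,y). x + y) (pair_pmf (polya_pmf \<alpha> \<beta>) (polya_pmf \<gamma> \<beta>))) k = pmf (polya_pmf (\<alpha>+\<gamma>) \<beta>) k" .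
qed


lemma polya_sum:
  assumes "finite I" "I \<noteq> {}" and a: "\<alpha> > 0" and b: "0 < \<beta>" "\<beta> < 1"
  shows "map_pmf (\<lambda>X. \<Sum>i\<in>I. X i) (Pi_pmf I 0 (\<lambda>_. polya_pmf \<alpha> \<beta>)) = polya_pmf (real (card I) * \<alpha>) \<beta>"
  using assms(1,2)
proof (induction I rule: finite_ne_induct)
  case (singleton x)
  show ?case by (simp add: Pi_pmf_singleton pmf.map_comp o_def)
next
  case (insert x F)
  have "map_pmf (\<lambda>X. \<Sum>i\<in>insert x F. X i) (Pi_pmf (insert x F) 0 (\<lambda>_. polya_pmf \<alpha> \<beta>))
     = map_pmf (\<lambda>(y,f). y + (\<Sum>i\<in>F. f i)) (pair_pmf (polya_pmf \<alpha> \<beta>) (Pi_pmf F 0 (\<lambda>_. polya_pmf \<alpha> \<beta>)))"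
    using insert.hyps by (subst Pi_pmf_insert) (auto simp: pmf.map_comp o_def case_prod_unfold intro!: map_pmf_cong sum.cong)
  also have "\<dots> = map_pmf (\<lambda>(y,z). y + z) (map_pmf (\<lambda>(y,f). (id y, \<Sum>i\<in>F. f i)) (pair_pmf (polya_pmf \<alpha> \<beta>) (Pi_pmf F 0 (\<lambda>_. polya_pmf \<alpha> \<beta>))))"
    by (simp add: pmf.map_comp o_def case_prod_unfold)
  also have "\<dots> = map_pmf (\<lambda>(y,z). y + z) (pair_pmf (polya_pmf \<alpha> \<beta>) (polya_pmf (real (card F) * \<alpha>) \<beta>))"
    unfolding map_pair insert.IH by simp
  also have "\<dots> = polya_pmf (\<alpha> + real (card F) * \<alpha>) \<beta>"
    using insert.hyps a b by (intro polya_add) (auto simp: card_gt_0_iff)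
  also have "\<alpha> + real (card F) * \<alpha> = real (card (insert x F)) * \<alpha>"
    using insert.hyps by (simp add: algebra_simps)
  finally show ?case .
qed


lemma geom_pmf:
  assumes b: "0 < \<beta>" "\<beta> < 1"
  shows "pmf (polya_pmf 1 \<beta>) k = (1 - \<beta>) * \<beta> ^ k"
  using b by (simp add: polya_pmf_eq pw_def pochhammer_fact[symmetric])

lemma pmf_map_minus:
  "pmf (map_pmf (\<lambda>y. c - int y) G) z = (if z \<le> c then pmf G (nat (c - z)) else 0)"
proof -
  have "(\<lambda>y. c - int y) -` {z} = (if z \<le> c then {nat (c - z)} else {})" by auto
  thus ?thesis unfolding pmf_map by (simp add: measure_pmf_single)
qed

definition DL :: "real \<Rightarrow> int pmf" where
  "DL \<beta> = map_pmf (\<lambda>(x,y). int x - int y) (pair_pmf (polya_pmf 1 \<beta>) (polya_pmf 1 \<beta>))"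

lemma DL_bind: "DL \<beta> = bind_pmf (polya_pmf 1 \<beta>) (\<lambda>x. map_pmf (\<lambda>y. int x - int y) (polya_pmf 1 \<beta>))"
  unfolding DL_def pair_pmf_def map_bind_pmf by (simp add: map_pmf_def[symmetric] pmf.map_comp o_def)

lemma DL_sym: "pmf (DL \<beta>) (-z) = pmf (DL \<beta>) z"
proof -
  have "DL \<beta> = map_pmf uminus (DL \<beta>)"
    unfolding DL_def by (subst pair_commute_pmf) (simp add: pmf.map_comp o_def case_prod_unfold)
  hence "pmf (DL \<beta>) (-z) = pmf (map_pmf uminus (DL \<beta>)) (- z)" by simp
  also have "\<dots> = pmf (DL \<beta>) z" by (rule pmf_map_inj') (simp add: inj_def)
  finally show ?thesis .
qed

lemma DL_neg:
  assumes b: "0 < \<beta>" "\<beta> < 1" and z: "z \<le> 0"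
  shows "pmf (DL \<beta>) z = \<beta> ^ nat (- z) * pmf (DL \<beta>) 0"
proof -
  have nz: "nat (int x - z) = x + nat (-z)" for x using z by auto
  have "pmf (DL \<beta>) z = (\<integral>x. \<beta> ^ nat (- z) * pmf (polya_pmf 1 \<beta>) x \<partial>polya_pmf 1 \<beta>)"
    unfolding DL_bind pmf_bind pmf_map_minus using z
    by (intro Bochner_Integration.integral_cong refl)
       (auto simp: geom_pmf b nz power_add)
  also have "\<dots> = \<beta> ^ nat (- z) * (\<integral>x. pmf (polya_pmf 1 \<beta>) x \<partial>polya_pmf 1 \<beta>)"
    by (rule integral_mult_right_zero)
  also have "(\<integral>x. pmf (polya_pmf 1 \<beta>) x \<partial>polya_pmf 1 \<beta>) = pmf (DL \<beta>) 0"
    unfolding DL_bind pmf_bind pmf_map_minus by simp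
  finally show ?thesis .
qed

lemma DL_formula:
  assumes t: "t > 0"
  shows "pmf (DL (exp (-t))) z = exp (- t * \<bar>real_of_int z\<bar>) * pmf (DL (exp (-t))) 0"
proof -
  have b: "0 < exp (-t)" "exp (-t) < 1" using t by auto
  have e: "exp (-t) ^ nat w = exp (- t * real_of_int w)" if "w \<ge> 0" for w :: int
    using that by (simp add: exp_of_nat_mult[symmetric] mult.commute)
  show ?thesis
  proof (cases "z \<le> 0")
    case True thus ?thesis using DL_neg[OF b True] e[of "-z"] by simp
  next
    case False
    hence "pmf (DL (exp (-t))) z = pmf (DL (exp (-t))) (-z)" by (simp add: DL_sym)
    also have "\<dots> = exp (-t) ^ nat z * pmf (DL (exp (-t))) 0" using DL_neg[OF b, of "-z"] False by simp
    finally show ?thesis using e[of z] False by simp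
  qed
qed

lemma DL_shift:
  assumes t: "t > 0"
  shows "pmf (map_pmf (\<lambda>w. a + w) (DL (exp (-t)))) u
         \<le> exp (t * \<bar>real_of_int (a - b)\<bar>) * pmf (map_pmf (\<lambda>w. b + w) (DL (exp (-t)))) u"
proof -
  have sh: "pmf (map_pmf (\<lambda>w. c + w) (DL (exp (-t)))) u = pmf (DL (exp (-t))) (u - c)" for c
  proof -
    have "pmf (map_pmf (\<lambda>w. c + w) (DL (exp (-t)))) (c + (u - c)) = pmf (DL (exp (-t))) (u - c)"
      by (rule pmf_map_inj') (simp add: inj_def)
    thus ?thesis by simp
  qed
  have K: "pmf (DL (exp (-t))) 0 \<ge> 0" by simp
  have "exp (- t * \<bar>real_of_int (u - a)\<bar>) \<le> exp (t * \<bar>real_of_int (a - b)\<bar>) * exp (- t * \<bar>real_of_int (u - b)\<bar>)"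
  proof -
    have "\<bar>real_of_int (u - b)\<bar> \<le> \<bar>real_of_int (u - a)\<bar> + \<bar>real_of_int (a - b)\<bar>" by linarith
    hence "t * \<bar>real_of_int (u - b)\<bar> \<le> t * (\<bar>real_of_int (u - a)\<bar> + \<bar>real_of_int (a - b)\<bar>)"
      using t by (intro mult_left_mono) auto
    thus ?thesis by (simp add: exp_add[symmetric] algebra_simps)
  qed
  from mult_right_mono[OF this K] show ?thesis
    unfolding sh DL_formula[OF t, of "u - a"] DL_formula[OF t, of "u - b"] by (simp add: mult.assoc)
qed


lemma Pi_pmf_pair:
  assumes A: "finite A"
  shows "map_pmf (\<lambda>(f,g) k. (f k, g k)) (pair_pmf (Pi_pmf A a p) (Pi_pmf A b q))
         = Pi_pmf A (a,b) (\<lambda>k. pair_pmf (p k) (q k))"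
proof (rule pmf_eqI)
  fix F :: "'a \<Rightarrow> 'b \<times> 'c"
  let ?h = "\<lambda>(f::'a\<Rightarrow>'b,g::'a\<Rightarrow>'c) k. (f k, g k)"
  have inj: "inj ?h" by (auto simp: inj_def fun_eq_iff)
  have F: "F = ?h (fst \<circ> F, snd \<circ> F)" by auto
  have "pmf (map_pmf ?h (pair_pmf (Pi_pmf A a p) (Pi_pmf A b q))) F
      = pmf (pair_pmf (Pi_pmf A a p) (Pi_pmf A b q)) (fst \<circ> F, snd \<circ> F)"
    by (subst F, rule pmf_map_inj'[OF inj])
  also have "\<dots> = pmf (Pi_pmf A (a,b) (\<lambda>k. pair_pmf (p k) (q k))) F"
  proof -
    have "(\<forall>x. x \<notin> A \<longrightarrow> F x = (a,b)) \<longleftrightarrow> (\<forall>x. x \<notin> A \<longrightarrow> fst (F x) = a) \<and> (\<forall>x. x \<notin> A \<longrightarrow> snd (F x) = b)"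
      by (metis prod.collapse fst_conv snd_conv)
    moreover have "pmf (pair_pmf (p k) (q k)) (F k) = pmf (p k) (fst (F k)) * pmf (q k) (snd (F k))" for k
      by (metis pmf_pair prod.collapse)
    ultimately show ?thesis
      unfolding pmf_pair pmf_Pi[OF A] by (auto simp: prod.distrib)
  qed
  finally show "pmf (map_pmf ?h (pair_pmf (Pi_pmf A a p) (Pi_pmf A b q))) F = pmf (Pi_pmf A (a,b) (\<lambda>k. pair_pmf (p k) (q k))) F" .
qed

lemma Pi_pmf_curry:
  assumes A: "finite A" and B: "finite B"
  shows "map_pmf (\<lambda>X k i. X (i,k)) (Pi_pmf (A \<times> B) dflt (\<lambda>_. p))
         = Pi_pmf B (\<lambda>_. dflt) (\<lambda>_. Pi_pmf A dflt (\<lambda>_. p))"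
proof (rule pmf_eqI)
  fix F :: "'b \<Rightarrow> 'a \<Rightarrow> 'c"
  let ?h = "\<lambda>X k i. X (i,k)"
  have inj: "inj ?h" by (auto simp: inj_def fun_eq_iff)
  have F: "F = ?h (\<lambda>(i,k). F k i)" by auto
  have "pmf (map_pmf ?h (Pi_pmf (A \<times> B) dflt (\<lambda>_. p))) F
      = pmf (Pi_pmf (A \<times> B) dflt (\<lambda>_. p)) (\<lambda>(i,k). F k i)"
    by (subst F, rule pmf_map_inj'[OF inj])
  also have "\<dots> = pmf (Pi_pmf B (\<lambda>_. dflt) (\<lambda>_. Pi_pmf A dflt (\<lambda>_. p))) F"
  proof (cases "\<forall>x. x \<notin> A \<times> B \<longrightarrow> (\<lambda>(i,k). F k i) x = dflt")
    case True
    hence c1: "\<forall>k. k \<notin> B \<longrightarrow> F k = (\<lambda>_. dflt)" and c2: "\<forall>k\<in>B. \<forall>i. i \<notin> A \<longrightarrow> F k i = dflt"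
      by (auto simp: fun_eq_iff)
    have "(\<Prod>x\<in>A \<times> B. pmf p ((\<lambda>(i,k). F k i) x)) = (\<Prod>i\<in>A. \<Prod>k\<in>B. pmf p (F k i))"
      by (simp add: prod.cartesian_product case_prod_unfold)
    also have "\<dots> = (\<Prod>k\<in>B. \<Prod>i\<in>A. pmf p (F k i))" by (rule prod.swap)
    moreover have "k \<in> B \<Longrightarrow> pmf (Pi_pmf A dflt (\<lambda>_. p)) (F k) = (\<Prod>i\<in>A. pmf p (F k i))" for k
      using c2 by (intro pmf_Pi' A) auto
    ultimately show ?thesis using True c1
      by (subst (1 2) pmf_Pi) (auto simp: A B intro!: prod.cong)
  next
    case False
    then obtain i k where ik: "(i,k) \<notin> A \<times> B" "F k i \<noteq> dflt" by auto
    show ?thesis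
    proof (cases "k \<in> B")
      case True
      with ik have "i \<notin> A" by auto
      hence "pmf (Pi_pmf A dflt (\<lambda>_. p)) (F k) = 0" using ik by (intro pmf_Pi_outside A) auto
      hence "(\<Prod>k\<in>B. pmf (Pi_pmf A dflt (\<lambda>_. p)) (F k)) = 0" using True B by (intro prod_zero) auto
      thus ?thesis using False by (subst (1 2) pmf_Pi) (auto simp: A B)
    next
      case kB: False
      have "F k \<noteq> (\<lambda>_. dflt)" using ik by auto
      thus ?thesis using False kB by (subst (1 2) pmf_Pi) (auto simp: A B)
    qed
  qed
  finally show "pmf (map_pmf ?h (Pi_pmf (A \<times> B) dflt (\<lambda>_. p))) F = pmf (Pi_pmf B (\<lambda>_. dflt) (\<lambda>_. Pi_pmf A dflt (\<lambda>_. p))) F" .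
qed


lemma Pi_pmf_map_comp:
  assumes "finite A"
  shows "map_pmf (\<lambda>C k. if k \<in> A then g k (C k) else dflt) (Pi_pmf A d' p)
       = Pi_pmf A dflt (\<lambda>k. map_pmf (g k) (p k))"
  using assms unfolding map_pmf_def by (subst Pi_pmf_bind[where d' = d']) auto

lemma sums_geom:
  fixes d :: nat
  assumes n: "n \<ge> 1" and t: "t > 0"
  shows "map_pmf (\<lambda>X k. \<Sum>i<n. X (i,k)) (Pi_pmf ({..<n} \<times> {..<d}) 0 (\<lambda>_. polya_pmf (1 / real n) (exp (-t))))
       = Pi_pmf {..<d} 0 (\<lambda>_. polya_pmf 1 (exp (-t)))"
proof -
  let ?Q = "polya_pmf (1 / real n) (exp (-t))"
  have "map_pmf (\<lambda>X k. \<Sum>i<n. X (i,k)) (Pi_pmf ({..<n} \<times> {..<d}) 0 (\<lambda>_. ?Q))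
      = map_pmf (\<lambda>F k. if k \<in> {..<d} then (\<lambda>g. \<Sum>i<n. g i) (F k) else 0)
          (map_pmf (\<lambda>X k i. X (i,k)) (Pi_pmf ({..<n} \<times> {..<d}) 0 (\<lambda>_. ?Q)))"
    unfolding pmf.map_comp o_def
  proof (intro map_pmf_cong refl ext)
    fix X k assume "X \<in> set_pmf (Pi_pmf ({..<n} \<times> {..<d}) 0 (\<lambda>_. ?Q))"
    hence "\<forall>x. x \<notin> {..<n} \<times> {..<d} \<longrightarrow> X x = 0" using set_Pi_pmf_subset[of "{..<n} \<times> {..<d}" 0 "\<lambda>_. ?Q"] finite_cartesian_product[OF finite_lessThan[of n] finite_lessThan[of d]] by blast
    thus "(\<Sum>i<n. X (i,k)) = (if k \<in> {..<d} then \<Sum>i<n. X (i,k) else 0)" by auto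
  qed
  also have "\<dots> = Pi_pmf {..<d} 0 (\<lambda>k. map_pmf (\<lambda>g. \<Sum>i<n. g i) (Pi_pmf {..<n} 0 (\<lambda>_. ?Q)))"
    by (subst Pi_pmf_curry; (rule Pi_pmf_map_comp)?; simp)
  also have "\<dots> = Pi_pmf {..<d} 0 (\<lambda>_. polya_pmf 1 (exp (-t)))"
  proof (rule Pi_pmf_cong[OF refl refl])
    fix k
    have "map_pmf (\<lambda>g. \<Sum>i<n. g i) (Pi_pmf {..<n} 0 (\<lambda>_. ?Q)) = polya_pmf (real (card {..<n}) * (1 / real n)) (exp (-t))"
      using n t by (intro polya_sum) (auto simp: lessThan_empty_iff)
    thus "map_pmf (\<lambda>g. \<Sum>i<n. g i) (Pi_pmf {..<n} 0 (\<lambda>_. ?Q)) = polya_pmf 1 (exp (-t))" using n by simp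
  qed
  finally show ?thesis .
qed

definition E :: "int \<Rightarrow> int \<Rightarrow> real \<Rightarrow> int pmf" where
  "E m a t = map_pmf (\<lambda>w. (a + w) mod m) (DL (exp (-t)))"

lemma mech_eq:
  assumes n: "n \<ge> 1" and t: "t > 0"
  shows "secagg_mech n d m (1 / real n) (exp (-t)) v
       = Pi_pmf {..<d} 0 (\<lambda>k. E m (\<Sum>i<n. v i k) t)"
proof -
  let ?Q = "polya_pmf (1 / real n) (exp (-t))"
  let ?P = "Pi_pmf ({..<n} \<times> {..<d}) 0 (\<lambda>_. ?Q)"
  let ?G = "polya_pmf 1 (exp (-t))"
  let ?S = "\<lambda>X k. \<Sum>i<n. X (i,k)"
  define H where "H = (\<lambda>(A::nat\<Rightarrow>nat, B::nat\<Rightarrow>nat) k. if k < d then ((\<Sum>i<n. v i k) + int (A k) - int (B k)) mod m else 0)"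
  have "secagg_mech n d m (1 / real n) (exp (-t)) v = map_pmf H (map_pmf (\<lambda>(X,Y). (?S X, ?S Y)) (pair_pmf ?P ?P))"
    unfolding secagg_mech_def pmf.map_comp o_def
  proof (intro map_pmf_cong refl)
    fix XY :: "(nat \<times> nat \<Rightarrow> nat) \<times> (nat \<times> nat \<Rightarrow> nat)"
    obtain X Y where XY: "XY = (X,Y)" by (cases XY)
    have "(\<Sum>i<n. (v i k + int (X (i, k)) - int (Y (i, k))) mod m) mod m
        = ((\<Sum>i<n. v i k) + int (\<Sum>i<n. X (i,k)) - int (\<Sum>i<n. Y (i,k))) mod m" for k
      by (simp add: mod_sum_eq sum.distrib sum_subtractf)
    thus "(case XY of (X, Y) \<Rightarrow> \<lambda>k. if k < d then (\<Sum>i<n. (v i k + int (X (i, k)) - int (Y (i, k))) mod m) mod m else 0)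
        = H (case XY of (X, Y) \<Rightarrow> (?S X, ?S Y))"
      by (simp add: XY H_def fun_eq_iff)
  qed
  also have "\<dots> = map_pmf H (pair_pmf (Pi_pmf {..<d} 0 (\<lambda>_. ?G)) (Pi_pmf {..<d} 0 (\<lambda>_. ?G)))"
    unfolding map_pair sums_geom[OF n t] ..
  also have "pair_pmf (Pi_pmf {..<d} 0 (\<lambda>_. ?G)) (Pi_pmf {..<d} 0 (\<lambda>_. ?G))
      = map_pmf (\<lambda>C. (fst \<circ> C, snd \<circ> C)) (Pi_pmf {..<d} (0,0) (\<lambda>_. pair_pmf ?G ?G))"
    by (subst Pi_pmf_pair[symmetric]) (auto simp: pmf.map_comp o_def case_prod_unfold)
  also have "map_pmf H \<dots> = map_pmf (\<lambda>C k. if k \<in> {..<d} then (\<lambda>(x,y). ((\<Sum>i<n. v i k) + int x - int y) mod m) (C k) else 0)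
         (Pi_pmf {..<d} (0,0) (\<lambda>_. pair_pmf ?G ?G))"
    unfolding pmf.map_comp o_def H_def by (intro map_pmf_cong refl) (auto simp: fun_eq_iff case_prod_unfold)
  also have "\<dots> = Pi_pmf {..<d} 0 (\<lambda>k. map_pmf (\<lambda>(x,y). ((\<Sum>i<n. v i k) + int x - int y) mod m) (pair_pmf ?G ?G))"
    by (rule Pi_pmf_map_comp) auto
  also have "\<dots> = Pi_pmf {..<d} 0 (\<lambda>k. E m (\<Sum>i<n. v i k) t)"
    unfolding E_def DL_def pmf.map_comp o_def by (intro Pi_pmf_cong refl) (simp add: case_prod_unfold algebra_simps)
  finally show ?thesis .
qed


lemma measure_le_pmf:
  assumes le: "\<And>x. pmf M1 x \<le> c * pmf M2 x" and c: "c \<ge> 0"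
  shows "measure_pmf.prob M1 S \<le> c * measure_pmf.prob M2 S"
proof -
  have "emeasure (measure_pmf M1) S = (\<integral>\<^sup>+x. indicator S x \<partial>measure_pmf M1)" by simp
  also have "\<dots> = (\<integral>\<^sup>+x. ennreal (pmf M1 x) * indicator S x \<partial>count_space UNIV)"
    by (rule nn_integral_measure_pmf)
  also have "\<dots> \<le> (\<integral>\<^sup>+x. ennreal c * (ennreal (pmf M2 x) * indicator S x) \<partial>count_space UNIV)"
    by (intro nn_integral_mono) (auto simp: ennreal_mult[symmetric] c le split: split_indicator)
  also have "\<dots> = ennreal c * (\<integral>\<^sup>+x. ennreal (pmf M2 x) * indicator S x \<partial>count_space UNIV)"
    by (rule nn_integral_cmult) auto
  also have "(\<integral>\<^sup>+x. ennreal (pmf M2 x) * indicator S x \<partial>count_space UNIV) = emeasure (measure_pmf M2) S"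
    by (simp add: nn_integral_measure_pmf[symmetric])
  finally have "ennreal (measure_pmf.prob M1 S) \<le> ennreal (c * measure_pmf.prob M2 S)"
    by (simp add: measure_pmf.emeasure_eq_measure ennreal_mult c)
  thus ?thesis using c by (simp add: ennreal_le_iff)
qed

lemma E_bound:
  assumes t: "t > 0"
  shows "pmf (E m a t) r \<le> exp (t * \<bar>real_of_int (a - b)\<bar>) * pmf (E m b t) r"
proof -
  have e: "E m c t = map_pmf (\<lambda>w. w mod m) (map_pmf (\<lambda>w. c + w) (DL (exp (-t))))" for c
    unfolding E_def by (simp add: pmf.map_comp o_def)
  show ?thesis unfolding e pmf_map
    by (rule measure_le_pmf[OF DL_shift[OF t]]) simp
qed

theorem mainTheorem1:
  fixes n d :: nat and m :: int and \<epsilon> \<Delta> :: real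
    and v v' :: "nat \<Rightarrow> nat \<Rightarrow> int" and S :: "(nat \<Rightarrow> int) set"
  assumes "n \<ge> 1" and "d \<ge> 1" and "m \<ge> 2" and "\<epsilon> > 0" and "\<Delta> > 0"
    and "neighboring n d \<Delta> v v'"
  shows "measure_pmf.prob (secagg_mech n d m (1 / real n) (exp (- \<epsilon> / \<Delta>)) v) S
         \<le> exp \<epsilon> * measure_pmf.prob (secagg_mech n d m (1 / real n) (exp (- \<epsilon> / \<Delta>)) v') S"
proof -
  define t where "t = \<epsilon> / \<Delta>"
  have t: "t > 0" using assms by (simp add: t_def)
  have et: "exp (- \<epsilon> / \<Delta>) = exp (- t)" by (simp add: t_def)
  define T where "T = (\<lambda>w k. \<Sum>i<n. (w::nat \<Rightarrow> nat \<Rightarrow> int) i k)"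
  obtain j where j: "j < n" "\<forall>i<n. i \<noteq> j \<longrightarrow> (\<forall>k<d. v i k = v' i k)"
    "real_of_int (\<Sum>k<d. \<bar>v j k - v' j k\<bar>) \<le> \<Delta>"
    using assms(6) unfolding neighboring_def by blast
  have Td: "T v k - T v' k = v j k - v' j k" if "k < d" for k
  proof -
    have "T v k - T v' k = (\<Sum>i<n. v i k - v' i k)" by (simp add: T_def sum_subtractf)
    also have "\<dots> = (v j k - v' j k) + (\<Sum>i\<in>{..<n} - {j}. v i k - v' i k)"
      using j(1) by (subst sum.remove[of _ j]) auto
    also have "(\<Sum>i\<in>{..<n} - {j}. v i k - v' i k) = 0" using j(2) that by (intro sum.neutral) auto
    finally show ?thesis by simp
  qed
  have sumT: "t * (\<Sum>k<d. \<bar>real_of_int (T v k - T v' k)\<bar>) \<le> \<epsilon>"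
  proof -
    have "(\<Sum>k<d. \<bar>real_of_int (T v k - T v' k)\<bar>) = real_of_int (\<Sum>k<d. \<bar>v j k - v' j k\<bar>)"
      by (simp add: Td)
    hence "t * (\<Sum>k<d. \<bar>real_of_int (T v k - T v' k)\<bar>) \<le> t * \<Delta>"
      using j(3) t by (intro mult_left_mono) auto
    also have "t * \<Delta> = \<epsilon>" using assms by (simp add: t_def)
    finally show ?thesis .
  qed
  have M: "secagg_mech n d m (1 / real n) (exp (- t)) w = Pi_pmf {..<d} 0 (\<lambda>k. E m (T w k) t)" for w
    unfolding T_def by (rule mech_eq[OF assms(1) t])
  have pw: "pmf (Pi_pmf {..<d} 0 (\<lambda>k. E m (T v k) t)) F \<le> exp \<epsilon> * pmf (Pi_pmf {..<d} 0 (\<lambda>k. E m (T v' k) t)) F" for F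
  proof (cases "\<forall>x. x \<notin> {..<d} \<longrightarrow> F x = 0")
    case True
    have "(\<Prod>k<d. pmf (E m (T v k) t) (F k)) \<le> (\<Prod>k<d. exp (t * \<bar>real_of_int (T v k - T v' k)\<bar>) * pmf (E m (T v' k) t) (F k))"
      by (intro prod_mono conjI E_bound[OF t]) auto
    also have "\<dots> = exp (t * (\<Sum>k<d. \<bar>real_of_int (T v k - T v' k)\<bar>)) * (\<Prod>k<d. pmf (E m (T v' k) t) (F k))"
      by (simp add: prod.distrib exp_sum sum_distrib_left)
    also have "\<dots> \<le> exp \<epsilon> * (\<Prod>k<d. pmf (E m (T v' k) t) (F k))"
      using sumT by (intro mult_right_mono prod_nonneg) auto
    finally show ?thesis using True by (simp add: pmf_Pi)
  qed (auto simp: pmf_Pi)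
  show ?thesis unfolding et M
    by (rule measure_le_pmf[OF pw]) simp
qed

end
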